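(* For $n\in\omega$ let $C_n=\{q^ip^j\in\mathcal{C}(p,q): i,j\le n\}$ and for $q^ip^j\in\mathcal{C}(p,q)$ let $W_n(q^ip^j)=\{q^ip^j\}\cup(\mathcal{C}(p,q)\setminus C_n)$. Let $\tau_c$ be the topology on $\mathcal{C}(p,q)$ generated by the neighbourhood bases $\{W_n(q^ip^j):n\in\omega\}$ at each point. Then $\tau_c$ is a compact $T_1$-topology on $\mathcal{C}(p,q)$ with respect to which the semigroup operation is separately continuous and the inversion is continuous.
   Context: The bicyclic monoid $\mathcal{C}(p,q)$ is the monoid generated by $p,q$ subject only to $pq=1$; elements are uniquely $q^ip^j$, $i,j\in\omega$, with multiplication $q^kp^l\cdot q^mp^n = q^{k-l+m}p^n$ if $l<m$, $=q^kp^n$ if $l=m$, $=q^kp^{l-m+n}$ if $l>m$, and inversion $(q^ip^j)^{-1}=q^jp^i$. *)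

theory Defs
  imports "HOL-Analysis.Analysis"
begin

text \<open>The bicyclic monoid C(p,q): the element q^i p^j is represented by the pair (i, j).\<close>
type_synonym bicyclic = "nat \<times> nat"

definition bc_mult :: "bicyclic \<Rightarrow> bicyclic \<Rightarrow> bicyclic" where
  "bc_mult a b = (case a of (k, l) \<Rightarrow> case b of (m, n) \<Rightarrow>
     if l < m then (k + (m - l), n)
     else if l = m then (k, n)
     else (k, (l - m) + n))"

definition bc_inv :: "bicyclic \<Rightarrow> bicyclic" where
  "bc_inv a = (case a of (i, j) \<Rightarrow> (j, i))"

definition bc_C :: "nat \<Rightarrow> bicyclic set" where
  "bc_C n = {(i, j). i \<le> n \<and> j \<le> n}"

definition bc_W :: "nat \<Rightarrow> bicyclic \<Rightarrow> bicyclic set" where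
  "bc_W n x = {x} \<union> (UNIV - bc_C n)"

definition tau_c :: "bicyclic topology" where
  "tau_c = topology_generated_by {bc_W n x | n x. True}"

end

theory Submission
  imports Defs
begin

lemma bc_C_finite: "finite (bc_C n)"
proof -
  have "bc_C n = {..n} \<times> {..n}" by (auto simp: bc_C_def)
  then show ?thesis by simp
qed

lemma finite_sub_C: "finite (F :: bicyclic set) \<Longrightarrow> \<exists>n. F \<subseteq> bc_C n"
proof -
  assume f: "finite F"
  then have "finite (fst ` F \<union> snd ` F)" by simp
  then obtain n where n: "\<forall>x\<in>fst ` F \<union> snd ` F. x \<le> n"
    using finite_nat_set_iff_bounded_le by blast
  then have "F \<subseteq> bc_C n" by (force simp: bc_C_def)
  then show ?thesis by blast
qed

lemma topspace_tau: "topspace tau_c = UNIV"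
  unfolding tau_c_def by (auto simp: bc_W_def)

lemma openin_tau: "openin tau_c U \<longleftrightarrow> U = {} \<or> finite (- U)"
proof
  assume "openin tau_c U"
  then have "generate_topology_on {bc_W n x | n x. True} U"
    unfolding tau_c_def by (rule openin_topology_generated_by)
  then show "U = {} \<or> finite (- U)"
  proof (induction rule: generate_topology_on.induct)
    case Empty then show ?case by simp
  next
    case (Int a b)
    then show ?case by (auto simp: Compl_Int)
  next
    case (UN K)
    show ?case
    proof (cases "\<exists>k\<in>K. k \<noteq> {}")
      case True
      then obtain k where k: "k \<in> K" "k \<noteq> {}" by blast
      then have "finite (- k)" using UN.IH by blast
      moreover have "- \<Union>K \<subseteq> - k" using k by auto
      ultimately show ?thesis using finite_subset by blast
    next
      case False then show ?thesis by auto
    qed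
  next
    case (Basis s)
    then obtain n x where s: "s = bc_W n x" by blast
    have "- s \<subseteq> bc_C n" by (auto simp: s bc_W_def)
    then show ?case using bc_C_finite finite_subset by blast
  qed
next
  assume "U = {} \<or> finite (- U)"
  then show "openin tau_c U"
  proof
    assume "U = {}" then show ?thesis by simp
  next
    assume "finite (- U)"
    then obtain n where n: "- U \<subseteq> bc_C n" using finite_sub_C by blast
    have eq: "U = \<Union> ((\<lambda>x. bc_W n x) ` U)" using n by (auto simp: bc_W_def)
    have "generate_topology_on {bc_W n x | n x. True} (\<Union> ((\<lambda>x. bc_W n x) ` U))"
      by (rule generate_topology_on.UN) (auto intro: generate_topology_on.Basis)
    then show ?thesis unfolding tau_c_def
      using eq openin_topology_generated_by_iff by metis
  qed
qed

lemma cont_finite_fibers: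
  assumes "\<And>b. finite {x. f x = b}"
  shows "continuous_map tau_c tau_c f"
  unfolding continuous_map_openin_preimage_eq topspace_tau openin_tau
proof (intro conjI allI impI)
  fix U :: "bicyclic set" assume "U = {} \<or> finite (- U)"
  then show "UNIV \<inter> f -` U = {} \<or> finite (- (UNIV \<inter> f -` U))"
  proof
    assume "finite (- U)"
    have "- (UNIV \<inter> f -` U) = (\<Union>b\<in>- U. {x. f x = b})" by auto
    then show ?thesis using \<open>finite (- U)\<close> assms by auto
  qed simp
qed simp

lemma left_fib: "finite {x. bc_mult a x = b}"
proof -
  obtain k l where a: "a = (k, l)" by force
  obtain c d where b: "b = (c, d)" by force
  have "{x. bc_mult a x = b} \<subseteq> {..c+l} \<times> {..d}"
    by (auto simp: a b bc_mult_def split: if_splits)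
  then show ?thesis using finite_subset by blast
qed

lemma right_fib: "finite {x. bc_mult x a = b}"
proof -
  obtain m n where a: "a = (m, n)" by force
  obtain c d where b: "b = (c, d)" by force
  have "{x. bc_mult x a = b} \<subseteq> {..c} \<times> {..d+m}"
    by (auto simp: a b bc_mult_def split: if_splits)
  then show ?thesis using finite_subset by blast
qed

lemma inv_fib: "finite {x. bc_inv x = b}"
proof -
  have "{x. bc_inv x = b} \<subseteq> {(snd b, fst b)}" by (auto simp: bc_inv_def)
  then show ?thesis using finite_subset by blast
qed

theorem proposition3:
  shows "topspace tau_c = UNIV
    \<and> compact_space tau_c
    \<and> t1_space tau_c
    \<and> (\<forall>a. continuous_map tau_c tau_c (\<lambda>x. bc_mult a x))
    \<and> (\<forall>a. continuous_map tau_c tau_c (\<lambda>x. bc_mult x a))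
    \<and> continuous_map tau_c tau_c bc_inv"
proof (intro conjI allI)
  show "topspace tau_c = UNIV" by (rule topspace_tau)
  show "compact_space tau_c"
    unfolding compact_space_alt topspace_tau
  proof (intro allI impI)
    fix \<U> assume h: "(\<forall>U\<in>\<U>. openin tau_c U) \<and> UNIV \<subseteq> \<Union>\<U>"
    obtain x0 :: bicyclic where True by blast
    from h obtain C0 where C0: "C0 \<in> \<U>" "x0 \<in> C0" by blast
    then have fin: "finite (- C0)" using h openin_tau by blast
    have "\<forall>y. \<exists>C\<in>\<U>. y \<in> C" using h by blast
    then obtain g where g: "\<And>y. g y \<in> \<U> \<and> y \<in> g y" by metis
    let ?F = "insert C0 (g ` (- C0))"
    have "finite ?F \<and> ?F \<subseteq> \<U> \<and> UNIV \<subseteq> \<Union>?F"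
      using fin C0 g by blast
    then show "\<exists>\<F>. finite \<F> \<and> \<F> \<subseteq> \<U> \<and> UNIV \<subseteq> \<Union>\<F>" by blast
  qed
  show "t1_space tau_c"
    unfolding t1_space_def topspace_tau
  proof (intro ballI impI)
    fix x y :: bicyclic assume "x \<noteq> y"
    moreover have "openin tau_c (- {y})" by (simp add: openin_tau)
    ultimately show "\<exists>U. openin tau_c U \<and> x \<in> U \<and> y \<notin> U" by blast
  qed
  fix a
  show "continuous_map tau_c tau_c (\<lambda>x. bc_mult a x)"
    by (rule cont_finite_fibers) (rule left_fib)
  show "continuous_map tau_c tau_c (\<lambda>x. bc_mult x a)"
    by (rule cont_finite_fibers) (rule right_fib)
next
  show "continuous_map tau_c tau_c bc_inv"
    by (rule cont_finite_fibers) (rule inv_fib)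
qed

end
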